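(* Let $\Lambda,\Gamma\in\mathcal D_n^+$ and let $f,g:\mathcal D_n^+\to\mathcal D_n^+$ be stable mappings. Then the mappings $\Delta\mapsto\Lambda f(\Gamma\Delta)$, $\Delta\mapsto f(\Delta)^{-1}$, $f\circ g$ and $f+g$ are all stable mappings.
   Context: $\mathcal D_n^+$ is the set of $n\times n$ diagonal matrices with positive diagonal entries; $d_s(\Delta,\Delta')=\max_i\frac{|\Delta_i-\Delta'_i|}{\sqrt{\Delta_i\Delta'_i}}$. A mapping $f:\mathcal D_n^+\to\mathcal D_n^+$ is stable if $d_s(f(\Delta),f(\Delta'))\le d_s(\Delta,\Delta')$ for all $\Delta,\Delta'\in\mathcal D_n^+$. *)

theory Defs
  imports "HOL-Analysis.Analysis"
begin

definition diag_pos :: "(real^'n^'n) set" where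
  "diag_pos = {D. (\<forall>i j. i \<noteq> j \<longrightarrow> D$i$j = 0) \<and> (\<forall>i. 0 < D$i$i)}"

definition d_s :: "real^'n^'n \<Rightarrow> real^'n^'n \<Rightarrow> real" where
  "d_s D D' = Max (range (\<lambda>i. \<bar>D$i$i - D'$i$i\<bar> / sqrt (D$i$i * D'$i$i)))"

definition stable :: "(real^'n^'n \<Rightarrow> real^'n^'n) \<Rightarrow> bool" where
  "stable f \<longleftrightarrow> (\<forall>D\<in>diag_pos. f D \<in> diag_pos) \<and>
     (\<forall>D\<in>diag_pos. \<forall>D'\<in>diag_pos. d_s (f D) (f D') \<le> d_s D D')"

end

theory Submission
  imports Defs
begin

definition dsi :: "real^'n^'n \<Rightarrow> real^'n^'n \<Rightarrow> 'n \<Rightarrow> real" where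
  "dsi D D' i = \<bar>D$i$i - D'$i$i\<bar> / sqrt (D$i$i * D'$i$i)"

lemma d_s_alt: "d_s D D' = Max (range (dsi D D'))"
  unfolding d_s_def dsi_def by simp

lemma ds_ge: "dsi D D' i \<le> d_s D D'"
  unfolding d_s_alt by (rule Max_ge) auto

lemma ds_le: "(\<And>i. dsi D D' i \<le> c) \<Longrightarrow> d_s D D' \<le> c"
  unfolding d_s_alt by (subst Max_le_iff) auto

lemma diag_mult_entry:
  assumes "A \<in> diag_pos"
  shows "(A ** B)$i$j = A$i$i * B$i$j"
proof -
  have "(A ** B)$i$j = (\<Sum>k\<in>UNIV. A$i$k * B$k$j)"
    by (simp add: matrix_matrix_mult_def)
  also have "\<dots> = (\<Sum>k\<in>UNIV. if k = i then A$i$i * B$i$j else 0)"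
    using assms unfolding diag_pos_def by (intro sum.cong) auto
  also have "\<dots> = A$i$i * B$i$j" by simp
  finally show ?thesis .
qed

lemma diag_mult_pos:
  assumes "A \<in> diag_pos" "B \<in> diag_pos"
  shows "A ** B \<in> diag_pos"
  using assms unfolding diag_pos_def by (simp add: diag_mult_entry[OF assms(1)])

lemma dsi_scale:
  assumes "A \<in> diag_pos" "X \<in> diag_pos" "Y \<in> diag_pos"
  shows "dsi (A ** X) (A ** Y) i = dsi X Y i"
proof -
  have a: "A$i$i > 0" using assms(1) unfolding diag_pos_def by auto
  have x: "X$i$i > 0" using assms(2) unfolding diag_pos_def by auto
  have y: "Y$i$i > 0" using assms(3) unfolding diag_pos_def by auto
  have s: "sqrt (A$i$i * X$i$i * (A$i$i * Y$i$i)) = A$i$i * sqrt (X$i$i * Y$i$i)"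
  proof -
    have "A$i$i * X$i$i * (A$i$i * Y$i$i) = (A$i$i)^2 * (X$i$i * Y$i$i)"
      by (simp add: power2_eq_square algebra_simps)
    then show ?thesis using a by (simp add: real_sqrt_mult)
  qed
  have "\<bar>A$i$i * X$i$i - A$i$i * Y$i$i\<bar> = A$i$i * \<bar>X$i$i - Y$i$i\<bar>"
    using a by (simp add: abs_mult right_diff_distrib[symmetric])
  then show ?thesis unfolding dsi_def diag_mult_entry[OF assms(1)] s
    using a by simp
qed

lemma ds_scale:
  assumes "A \<in> diag_pos" "X \<in> diag_pos" "Y \<in> diag_pos"
  shows "d_s (A ** X) (A ** Y) = d_s X Y"
  unfolding d_s_alt using dsi_scale[OF assms] by simp

definition dinv :: "real^'n^'n \<Rightarrow> real^'n^'n" where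
  "dinv X = (\<chi> i j. if i = j then 1 / X$i$i else 0)"

lemma dinv_pos: "X \<in> diag_pos \<Longrightarrow> dinv X \<in> diag_pos"
  unfolding diag_pos_def dinv_def by auto

lemma dinv_prod:
  fixes X :: "real^'n^'n"
  assumes "X \<in> diag_pos"
  shows "X ** dinv X = mat 1" "dinv X ** X = mat 1"
proof -
  show "X ** dinv X = mat 1"
    using assms unfolding vec_eq_iff
    by (auto simp: diag_mult_entry mat_def dinv_def diag_pos_def) (metis less_irrefl)
  have "(dinv X ** X)$i$j = (mat 1 :: real^'n^'n)$i$j" for i j :: 'n
    using assms diag_mult_entry[OF dinv_pos[OF assms], of X i j]
    by (auto simp: mat_def dinv_def diag_pos_def) (metis less_irrefl)
  then show "dinv X ** X = mat 1" unfolding vec_eq_iff by auto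
qed

lemma matrix_inv_diag:
  fixes X :: "real^'n^'n"
  assumes "X \<in> diag_pos"
  shows "matrix_inv X = dinv X"
proof -
  let ?P = "\<lambda>A'::real^'n^'n. X ** A' = mat 1 \<and> A' ** X = mat 1"
  have "?P (dinv X)" using dinv_prod[OF assms] by auto
  then have p: "?P (matrix_inv X)" unfolding matrix_inv_def by (rule someI)
  have "matrix_inv X = (dinv X ** X) ** matrix_inv X" using dinv_prod[OF assms] by simp
  also have "\<dots> = dinv X ** (X ** matrix_inv X)" by (simp add: matrix_mul_assoc)
  also have "\<dots> = dinv X" using p by simp
  finally show ?thesis .
qed

lemma dsi_inv:
  assumes "X \<in> diag_pos" "Y \<in> diag_pos"
  shows "dsi (dinv X) (dinv Y) i = dsi X Y i"
proof -
  have x: "X$i$i > 0" using assms(1) unfolding diag_pos_def by auto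
  have y: "Y$i$i > 0" using assms(2) unfolding diag_pos_def by auto
  define a where "a = X$i$i"
  define b where "b = Y$i$i"
  have a: "a > 0" and b: "b > 0" using x y a_def b_def by auto
  have "\<bar>1/a - 1/b\<bar> / sqrt (1/a * (1/b)) = \<bar>a - b\<bar> / sqrt (a*b)"
  proof -
    have sq: "sqrt (a*b) * sqrt (a*b) = a*b" using a b by simp
    have sp: "sqrt (a*b) > 0" using a b by simp
    have "\<bar>1/a - 1/b\<bar> = \<bar>a - b\<bar> / (a*b)" using a b
      by (simp add: field_simps abs_minus_commute)
    moreover have "sqrt (1/a * (1/b)) = 1 / sqrt (a*b)"
      by (simp add: real_sqrt_divide)
    ultimately have "\<bar>1/a - 1/b\<bar> / sqrt (1/a * (1/b)) = \<bar>a - b\<bar> * sqrt (a*b) / (a*b)"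
      by simp
    also have "\<dots> = \<bar>a - b\<bar> / sqrt (a*b)" using sq sp
      by (metis (no_types, lifting) divide_divide_eq_right nonzero_mult_div_cancel_right order_less_irrefl times_divide_eq_right)
    finally show ?thesis .
  qed
  then show ?thesis unfolding dsi_def dinv_def a_def b_def by simp
qed

lemma sum_ineq:
  fixes a b c d M :: real
  assumes "a > 0" "b > 0" "c > 0" "d > 0"
    and "\<bar>a - b\<bar> / sqrt (a*b) \<le> M" "\<bar>c - d\<bar> / sqrt (c*d) \<le> M"
  shows "\<bar>(a + c) - (b + d)\<bar> / sqrt ((a+c)*(b+d)) \<le> M"
proof -
  have s1: "sqrt (a*b) > 0" "sqrt (c*d) > 0" using assms by auto
  have h1: "\<bar>a - b\<bar> \<le> M * sqrt (a*b)" using assms(5) s1 by (simp add: divide_le_eq)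
  have h2: "\<bar>c - d\<bar> \<le> M * sqrt (c*d)" using assms(6) s1 by (simp add: divide_le_eq)
  have M: "M \<ge> 0" using assms(5) s1 by (meson abs_ge_zero divide_nonneg_pos order_trans)
  have cs: "sqrt (a*b) + sqrt (c*d) \<le> sqrt ((a+c)*(b+d))"
  proof -
    have "(sqrt (a*b) + sqrt (c*d))^2 = a*b + c*d + 2 * sqrt (a*b*(c*d))"
      using assms by (simp add: power2_eq_square algebra_simps real_sqrt_mult)
    also have "sqrt (a*b*(c*d)) = sqrt ((a*d)*(c*b))" by (simp add: algebra_simps)
    also have "2 * sqrt ((a*d)*(c*b)) \<le> a*d + c*b"
    proof -
      have "sqrt ((a*d)*(c*b)) \<le> (a*d + c*b)/2"
        using arith_geo_mean_sqrt[of "a*d" "c*b"] assms by simp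
      then show ?thesis by simp
    qed
    finally have "(sqrt (a*b) + sqrt (c*d))^2 \<le> (a+c)*(b+d)"
      by (simp add: algebra_simps)
    then show ?thesis using assms
      by (metis real_le_rsqrt add_nonneg_nonneg real_sqrt_ge_zero less_imp_le mult_nonneg_nonneg)
  qed
  have "\<bar>(a + c) - (b + d)\<bar> \<le> \<bar>a - b\<bar> + \<bar>c - d\<bar>" by simp
  also have "\<dots> \<le> M * (sqrt (a*b) + sqrt (c*d))" using h1 h2 by (simp add: algebra_simps)
  also have "\<dots> \<le> M * sqrt ((a+c)*(b+d))" using M cs by (simp add: mult_left_mono)
  finally show ?thesis using assms
    by (simp add: divide_le_eq mult.commute)
qed

theorem mainTheorem6:
  fixes \<Lambda> \<Gamma> :: "real^'n^'n"
    and f g :: "real^'n^'n \<Rightarrow> real^'n^'n"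
  assumes "\<Lambda> \<in> diag_pos" and "\<Gamma> \<in> diag_pos"
    and "stable f" and "stable g"
  shows "stable (\<lambda>D. \<Lambda> ** f (\<Gamma> ** D)) \<and> stable (\<lambda>D. matrix_inv (f D))
    \<and> stable (f \<circ> g) \<and> stable (\<lambda>D. f D + g D)"
proof (intro conjI)
  have fp: "\<And>D. D \<in> diag_pos \<Longrightarrow> f D \<in> diag_pos"
    and fs: "\<And>D D'. D \<in> diag_pos \<Longrightarrow> D' \<in> diag_pos \<Longrightarrow> d_s (f D) (f D') \<le> d_s D D'"
    using assms(3) unfolding stable_def by auto
  have gp: "\<And>D. D \<in> diag_pos \<Longrightarrow> g D \<in> diag_pos"
    and gs: "\<And>D D'. D \<in> diag_pos \<Longrightarrow> D' \<in> diag_pos \<Longrightarrow> d_s (g D) (g D') \<le> d_s D D'"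
    using assms(4) unfolding stable_def by auto
  show "stable (\<lambda>D. \<Lambda> ** f (\<Gamma> ** D))"
    unfolding stable_def
  proof (intro conjI ballI)
    fix D :: "real^'n^'n" assume "D \<in> diag_pos"
    then show "\<Lambda> ** f (\<Gamma> ** D) \<in> diag_pos"
      using assms(1,2) by (simp add: diag_mult_pos fp)
  next
    fix D D' :: "real^'n^'n" assume d: "D \<in> diag_pos" "D' \<in> diag_pos"
    have "d_s (\<Lambda> ** f (\<Gamma> ** D)) (\<Lambda> ** f (\<Gamma> ** D')) = d_s (f (\<Gamma> ** D)) (f (\<Gamma> ** D'))"
      using d assms(1,2) by (simp add: ds_scale diag_mult_pos fp)
    also have "\<dots> \<le> d_s (\<Gamma> ** D) (\<Gamma> ** D')"
      using d assms(2) by (simp add: fs diag_mult_pos)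
    also have "\<dots> = d_s D D'" using d assms(2) by (simp add: ds_scale)
    finally show "d_s (\<Lambda> ** f (\<Gamma> ** D)) (\<Lambda> ** f (\<Gamma> ** D')) \<le> d_s D D'" .
  qed
  show "stable (\<lambda>D. matrix_inv (f D))"
    unfolding stable_def
  proof (intro conjI ballI)
    fix D :: "real^'n^'n" assume "D \<in> diag_pos"
    then show "matrix_inv (f D) \<in> diag_pos"
      by (simp add: fp matrix_inv_diag dinv_pos)
  next
    fix D D' :: "real^'n^'n" assume d: "D \<in> diag_pos" "D' \<in> diag_pos"
    have "d_s (matrix_inv (f D)) (matrix_inv (f D')) = d_s (f D) (f D')"
      using d unfolding d_s_alt by (simp add: fp matrix_inv_diag dsi_inv)
    also have "\<dots> \<le> d_s D D'" using d fs by simp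
    finally show "d_s (matrix_inv (f D)) (matrix_inv (f D')) \<le> d_s D D'" .
  qed
  show "stable (f \<circ> g)"
    unfolding stable_def
  proof (intro conjI ballI)
    fix D :: "real^'n^'n" assume "D \<in> diag_pos"
    then show "(f \<circ> g) D \<in> diag_pos" by (simp add: fp gp)
  next
    fix D D' :: "real^'n^'n" assume d: "D \<in> diag_pos" "D' \<in> diag_pos"
    have "d_s (f (g D)) (f (g D')) \<le> d_s (g D) (g D')" using d by (simp add: fs gp)
    also have "\<dots> \<le> d_s D D'" using d gs by simp
    finally show "d_s ((f \<circ> g) D) ((f \<circ> g) D') \<le> d_s D D'" by simp
  qed
  show "stable (\<lambda>D. f D + g D)"
    unfolding stable_def
  proof (intro conjI ballI)
    fix D :: "real^'n^'n" assume "D \<in> diag_pos"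
    then show "f D + g D \<in> diag_pos"
      using fp[of D] gp[of D] unfolding diag_pos_def by (auto intro: add_pos_pos)
  next
    fix D D' :: "real^'n^'n" assume d: "D \<in> diag_pos" "D' \<in> diag_pos"
    show "d_s (f D + g D) (f D' + g D') \<le> d_s D D'"
    proof (rule ds_le)
      fix i
      have p: "f D$i$i > 0" "f D'$i$i > 0" "g D$i$i > 0" "g D'$i$i > 0"
        using fp[OF d(1)] fp[OF d(2)] gp[OF d(1)] gp[OF d(2)] unfolding diag_pos_def by auto
      have h1: "dsi (f D) (f D') i \<le> d_s D D'" using ds_ge fs[OF d] order_trans by blast
      have h2: "dsi (g D) (g D') i \<le> d_s D D'" using ds_ge gs[OF d] order_trans by blast
      show "dsi (f D + g D) (f D' + g D') i \<le> d_s D D'"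
        using sum_ineq[OF p(1) p(2) p(3) p(4)] h1 h2 unfolding dsi_def by simp
    qed
  qed
qed

end
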